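(* Let $(X,d)$ be a complete $\mathrm{CAT}(0)$-space and $\xi:[0,\ell)\to X$ a self-contracted curve. Then for every $\tau\in[0,\ell)$ and all $t_1,t_2\in(\tau,\ell)$ with $\xi(t_1)\ne\xi(\tau)$ and $\xi(t_2)\ne\xi(\tau)$, we have $\angle[\xi(t_1)\,\xi(\tau)\,\xi(t_2)]<\pi/2$.
   Context: A geodesic metric space $(X,d)$ is a $\mathrm{CAT}(0)$-space if for all $x,y,z\in X$ and every minimal geodesic $\gamma:[0,1]\to X$ from $y$ to $z$ (i.e. $d(\gamma(s),\gamma(t))=|t-s|d(y,z)$), $d^2(x,\gamma(s))\le(1-s)d^2(x,y)+sd^2(x,z)-(1-s)sd^2(y,z)$ for all $s\in[0,1]$; minimal geodesics are then unique, denoted $\gamma_{xy}$. The Euclidean comparison angle $\tilde\angle[yxz]\in[0,\pi]$ is defined by $\cos\tilde\angle[yxz]=\frac{d^2(x,y)+d^2(x,z)-d^2(y,z)}{2d(x,y)d(x,z)}$, and the angle is $\angle[yxz]:=\lim_{s,t\to0}\tilde\angle[\gamma_{xy}(s)\,x\,\gamma_{xz}(t)]$. A map $\xi:[0,\ell)\to X$ (not necessarily continuous) is self-contracted if $d(\xi(t_2),\xi(t_3))\le d(\xi(t_1),\xi(t_3))$ for all $0\le t_1\le t_2\le t_3<\ell$. *)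

theory Defs
  imports "HOL-Analysis.Analysis" "HOL-Library.Extended_Real"
begin

definition min_geodesic :: "(real \<Rightarrow> 'a::metric_space) \<Rightarrow> 'a \<Rightarrow> 'a \<Rightarrow> bool" where
  "min_geodesic \<gamma> y z \<longleftrightarrow> \<gamma> 0 = y \<and> \<gamma> 1 = z \<and>
     (\<forall>s\<in>{0..1}. \<forall>t\<in>{0..1}. dist (\<gamma> s) (\<gamma> t) = \<bar>t - s\<bar> * dist y z)"

definition geodesic_space :: "'a::metric_space itself \<Rightarrow> bool" where
  "geodesic_space _ \<longleftrightarrow> (\<forall>y z::'a. \<exists>\<gamma>. min_geodesic \<gamma> y z)"

definition CAT0 :: "'a::metric_space itself \<Rightarrow> bool" where
  "CAT0 T \<longleftrightarrow> geodesic_space T \<and>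
     (\<forall>x y z::'a. \<forall>\<gamma>. min_geodesic \<gamma> y z \<longrightarrow>
        (\<forall>s\<in>{0..1}. (dist x (\<gamma> s))\<^sup>2 \<le>
            (1 - s) * (dist x y)\<^sup>2 + s * (dist x z)\<^sup>2 - (1 - s) * s * (dist y z)\<^sup>2))"

text \<open>The (unique, in a CAT(0) space) minimal geodesic from x to y.\<close>
definition geod :: "'a::metric_space \<Rightarrow> 'a \<Rightarrow> real \<Rightarrow> 'a" where
  "geod x y s = (THE p. \<exists>\<gamma>. min_geodesic \<gamma> x y \<and> \<gamma> s = p)"

definition comp_angle :: "'a::metric_space \<Rightarrow> 'a \<Rightarrow> 'a \<Rightarrow> real" where
  "comp_angle y x z = arccos (((dist x y)\<^sup>2 + (dist x z)\<^sup>2 - (dist y z)\<^sup>2) / (2 * dist x y * dist x z))"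

definition geo_angle :: "'a::metric_space \<Rightarrow> 'a \<Rightarrow> 'a \<Rightarrow> real" where
  "geo_angle y x z = Lim (at (0,0) within ({0<..1} \<times> {0<..1}))
      (\<lambda>(s,t). comp_angle (geod x y s) x (geod x z t))"

definition self_contracted :: "ereal \<Rightarrow> (real \<Rightarrow> 'a::metric_space) \<Rightarrow> bool" where
  "self_contracted l \<xi> \<longleftrightarrow> (\<forall>t1 t2 t3. 0 \<le> t1 \<and> t1 \<le> t2 \<and> t2 \<le> t3 \<and> ereal t3 < l \<longrightarrow>
      dist (\<xi> t2) (\<xi> t3) \<le> dist (\<xi> t1) (\<xi> t3))"

end

theory Submission
  imports Defs
begin

definition cosx :: "'a::metric_space \<Rightarrow> 'a \<Rightarrow> 'a \<Rightarrow> real" where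
  "cosx x p q = ((dist x p)\<^sup>2 + (dist x q)\<^sup>2 - (dist p q)\<^sup>2) / (2 * dist x p * dist x q)"

lemma comp_angle_cosx: "comp_angle p x q = arccos (cosx x p q)"
  unfolding comp_angle_def cosx_def by simp

lemma cosx_sym: "cosx x p q = cosx x q p"
  unfolding cosx_def by (simp add: dist_commute mult.commute mult.left_commute add.commute)

lemma mg_dist: "min_geodesic \<gamma> y z \<Longrightarrow> s \<in> {0..1} \<Longrightarrow> t \<in> {0..1} \<Longrightarrow>
   dist (\<gamma> s) (\<gamma> t) = \<bar>t - s\<bar> * dist y z"
  unfolding min_geodesic_def by blast

lemma mg_0: "min_geodesic \<gamma> y z \<Longrightarrow> \<gamma> 0 = y" unfolding min_geodesic_def by blast
lemma mg_1: "min_geodesic \<gamma> y z \<Longrightarrow> \<gamma> 1 = z" unfolding min_geodesic_def by blast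

lemma mg_dist0: "min_geodesic \<gamma> y z \<Longrightarrow> s \<in> {0..1} \<Longrightarrow> dist y (\<gamma> s) = s * dist y z"
  using mg_dist[of \<gamma> y z 0 s] mg_0[of \<gamma> y z] by auto

lemma mg_dist1: "min_geodesic \<gamma> y z \<Longrightarrow> s \<in> {0..1} \<Longrightarrow> dist z (\<gamma> s) = (1 - s) * dist y z"
  using mg_dist[of \<gamma> y z 1 s] mg_1[of \<gamma> y z] by (auto simp: dist_commute)

lemma cat0_ineq:
  assumes "CAT0 TYPE('a::metric_space)" "min_geodesic \<gamma> y z" "s \<in> {0..1}"
  shows "(dist (w::'a) (\<gamma> s))\<^sup>2 \<le> (1 - s) * (dist w y)\<^sup>2 + s * (dist w z)\<^sup>2 - (1 - s) * s * (dist y z)\<^sup>2"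
  using assms unfolding CAT0_def by blast

lemma cat0_geodesic_ex:
  assumes "CAT0 TYPE('a::metric_space)"
  shows "\<exists>\<gamma>. min_geodesic \<gamma> (y::'a) z"
  using assms unfolding CAT0_def geodesic_space_def by blast

lemma geodesic_unique:
  assumes c: "CAT0 TYPE('a::metric_space)" and g: "min_geodesic \<gamma> (x::'a) y"
    and g': "min_geodesic \<gamma>' x y" and s: "s \<in> {0..1}"
  shows "\<gamma>' s = \<gamma> s"
proof -
  define D where "D = dist x y"
  have h: "(dist (\<gamma>' s) (\<gamma> s))\<^sup>2 \<le> (1 - s) * (dist (\<gamma>' s) x)\<^sup>2 + s * (dist (\<gamma>' s) y)\<^sup>2 - (1 - s) * s * D\<^sup>2"
    using cat0_ineq[OF c g s] D_def by blast
  have 1: "dist (\<gamma>' s) x = s * D" using mg_dist0[OF g' s] D_def by (simp add: dist_commute)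
  have 2: "dist (\<gamma>' s) y = (1 - s) * D" using mg_dist1[OF g' s] D_def by (simp add: dist_commute)
  have "(1 - s) * (s * D)\<^sup>2 + s * ((1 - s) * D)\<^sup>2 - (1 - s) * s * D\<^sup>2 = 0"
    by (simp add: power2_eq_square algebra_simps)
  with h 1 2 have "(dist (\<gamma>' s) (\<gamma> s))\<^sup>2 \<le> 0" by simp
  then show ?thesis by simp
qed

lemma geod_eq:
  assumes c: "CAT0 TYPE('a::metric_space)" and g: "min_geodesic \<gamma> (x::'a) y" and s: "s \<in> {0..1}"
  shows "geod x y s = \<gamma> s"
  unfolding geod_def
proof (rule the_equality)
  show "\<exists>\<gamma>'. min_geodesic \<gamma>' x y \<and> \<gamma>' s = \<gamma> s" using g by blast
next
  fix p assume "\<exists>\<gamma>'. min_geodesic \<gamma>' x y \<and> \<gamma>' s = p"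
  then obtain \<gamma>' where "min_geodesic \<gamma>' x y" "\<gamma>' s = p" by blast
  then show "p = \<gamma> s" using geodesic_unique[OF c g _ s] by blast
qed

lemma sub_geodesic:
  assumes g: "min_geodesic \<gamma> x y" and r: "0 < r" "r \<le> 1"
  shows "min_geodesic (\<lambda>u. \<gamma> (r * u)) x (\<gamma> r)"
  unfolding min_geodesic_def
proof (intro conjI ballI)
  show "\<gamma> (r * 0) = x" using mg_0[OF g] by simp
  show "\<gamma> (r * 1) = \<gamma> r" by simp
  fix u v :: real assume u: "u \<in> {0..1}" and v: "v \<in> {0..1}"
  have ru: "r * u \<in> {0..1}" "r * v \<in> {0..1}" using u v r by (auto simp: mult_le_one)
  have "dist (\<gamma> (r * u)) (\<gamma> (r * v)) = \<bar>r * v - r * u\<bar> * dist x y" using mg_dist[OF g ru] .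
  also have "\<dots> = \<bar>v - u\<bar> * (r * dist x y)" using r
    by (simp add: abs_mult right_diff_distrib[symmetric])
  also have "r * dist x y = dist x (\<gamma> r)" using mg_dist0[OF g, of r] r by simp
  finally show "dist (\<gamma> (r * u)) (\<gamma> (r * v)) = \<bar>v - u\<bar> * dist x (\<gamma> r)" .
qed

lemma cosx_bounds:
  assumes "p \<noteq> x" "q \<noteq> x"
  shows "-1 \<le> cosx x p q \<and> cosx x p q \<le> 1"
proof -
  define a b c where "a = dist x p" "b = dist x q" "c = dist p q"
  have a: "a > 0" "b > 0" using assms a_b_c_def by auto
  have t1: "c \<le> a + b" using dist_triangle[of p q x] a_b_c_def by (simp add: dist_commute)
  have t2: "a \<le> c + b" using dist_triangle[of x p q] a_b_c_def by (simp add: dist_commute[of q p])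
  have t3: "b \<le> a + c" using dist_triangle[of x q p] a_b_c_def by simp
  have c0: "c \<ge> 0" using a_b_c_def by simp
  have "c\<^sup>2 \<le> (a+b)\<^sup>2" using t1 c0 by (simp add: power_mono)
  moreover have "(a-b)\<^sup>2 \<le> c\<^sup>2"
  proof -
    have "\<bar>a-b\<bar> \<le> c" using t2 t3 by arith
    then have "\<bar>a-b\<bar>\<^sup>2 \<le> c\<^sup>2" by (rule power_mono) simp
    then show ?thesis by simp
  qed
  ultimately have h1: "-(2*a*b) \<le> a\<^sup>2 + b\<^sup>2 - c\<^sup>2" and h2: "a\<^sup>2 + b\<^sup>2 - c\<^sup>2 \<le> 2*a*b"
    unfolding power2_sum power2_diff by linarith+
  have p: "2*a*b > 0" using a by simp
  have "-1 \<le> (a\<^sup>2 + b\<^sup>2 - c\<^sup>2) / (2*a*b)" using h1 p by (simp add: le_divide_eq)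
  moreover have "(a\<^sup>2 + b\<^sup>2 - c\<^sup>2) / (2*a*b) \<le> 1" using h2 p by (simp add: divide_le_eq)
  ultimately have "-1 \<le> (a\<^sup>2 + b\<^sup>2 - c\<^sup>2) / (2*a*b)" "(a\<^sup>2 + b\<^sup>2 - c\<^sup>2) / (2*a*b) \<le> 1"
    by auto
  then show ?thesis unfolding cosx_def a_b_c_def by simp
qed

lemma cos_mono1:
  assumes c: "CAT0 TYPE('a::metric_space)" and g: "min_geodesic \<gamma> (x::'a) y"
    and xy: "x \<noteq> y" and wx: "w \<noteq> x" and s: "0 < s" "s \<le> 1"
  shows "cosx x y w \<le> cosx x (\<gamma> s) w"
proof -
  define a b c where "a = dist x y" "b = dist x w" "c = dist y w"
  have a: "a > 0" "b > 0" using xy wx a_b_c_def by auto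
  have s01: "s \<in> {0..1}" using s by simp
  have dp: "dist x (\<gamma> s) = s * a" using mg_dist0[OF g s01] a_b_c_def by simp
  have h: "(dist w (\<gamma> s))\<^sup>2 \<le> (1 - s) * b\<^sup>2 + s * c\<^sup>2 - (1 - s) * s * a\<^sup>2"
    using cat0_ineq[OF c g s01, of w] a_b_c_def by (simp add: dist_commute)
  have num: "s * (a\<^sup>2 + b\<^sup>2 - c\<^sup>2) \<le> (s*a)\<^sup>2 + b\<^sup>2 - (dist (\<gamma> s) w)\<^sup>2"
    using h by (simp add: dist_commute power2_eq_square algebra_simps)
  have pos: "2 * (s*a) * b > 0" using a s by simp
  have "cosx x y w = s * (a\<^sup>2 + b\<^sup>2 - c\<^sup>2) / (2 * (s*a) * b)"
    unfolding cosx_def a_b_c_def using s a a_b_c_def by (simp add: field_simps)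
  also have "\<dots> \<le> ((s*a)\<^sup>2 + b\<^sup>2 - (dist (\<gamma> s) w)\<^sup>2) / (2 * (s*a) * b)"
    by (rule divide_right_mono[OF num]) (use pos in simp)
  also have "\<dots> = cosx x (\<gamma> s) w" unfolding cosx_def dp a_b_c_def by simp
  finally show ?thesis .
qed

lemma cos_mono:
  assumes c: "CAT0 TYPE('a::metric_space)" and g: "min_geodesic \<gamma> (x::'a) y"
    and xy: "x \<noteq> y" and wx: "w \<noteq> x" and s: "0 < s'" "s' \<le> s" "s \<le> 1"
  shows "cosx x (\<gamma> s) w \<le> cosx x (\<gamma> s') w"
proof -
  have g': "min_geodesic (\<lambda>u. \<gamma> (s * u)) x (\<gamma> s)" using sub_geodesic[OF g] s by simp
  have "dist x (\<gamma> s) = s * dist x y" using mg_dist0[OF g, of s] s by simp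
  then have "x \<noteq> \<gamma> s" using xy s by auto
  from cos_mono1[OF c g' this wx, of "s'/s"] s
  show ?thesis by simp
qed

lemma angle_le_comp:
  assumes c: "CAT0 TYPE('a::metric_space)" and xy: "(x::'a) \<noteq> y" and xz: "x \<noteq> z"
  shows "geo_angle y x z \<le> arccos (cosx x y z)"
proof -
  obtain G1 where g1: "min_geodesic G1 x y" using cat0_geodesic_ex[OF c] by blast
  obtain G2 where g2: "min_geodesic G2 x z" using cat0_geodesic_ex[OF c] by blast
  define S :: "(real \<times> real) set" where "S = {0<..1} \<times> {0<..1}"
  define Q where "Q p = cosx x (geod x y (fst p)) (geod x z (snd p))" for p :: "real \<times> real"
  have QG: "Q p = cosx x (G1 (fst p)) (G2 (snd p))" if "p \<in> S" for p
    using that geod_eq[OF c g1, of "fst p"] geod_eq[OF c g2, of "snd p"] unfolding Q_def S_def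
    by auto
  have G1ne: "G1 s \<noteq> x" if "0 < s" "s \<le> 1" for s
    using mg_dist0[OF g1, of s] that xy by auto
  have G2ne: "G2 s \<noteq> x" if "0 < s" "s \<le> 1" for s
    using mg_dist0[OF g2, of s] that xz by auto
  have Qb: "-1 \<le> Q p \<and> Q p \<le> 1" if "p \<in> S" for p
    using QG[OF that] cosx_bounds[OF G1ne G2ne, of "fst p" "snd p"] that unfolding S_def
    by (auto simp: mem_Times_iff)
  have mono: "Q p \<le> Q p'" if "p \<in> S" "p' \<in> S" "fst p' \<le> fst p" "snd p' \<le> snd p" for p p'
  proof -
    obtain s t where p: "p = (s,t)" by (cases p)
    obtain s' t' where p': "p' = (s',t')" by (cases p')
    have r: "0 < s" "s \<le> 1" "0 < t" "t \<le> 1" "0 < s'" "s' \<le> 1" "0 < t'" "t' \<le> 1" "s' \<le> s" "t' \<le> t"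
      using that p p' unfolding S_def by auto
    have "cosx x (G1 s) (G2 t) \<le> cosx x (G1 s') (G2 t)"
      using cos_mono[OF c g1 xy, of "G2 t" s' s] G2ne[of t] r by auto
    also have "\<dots> = cosx x (G2 t) (G1 s')" by (rule cosx_sym)
    also have "\<dots> \<le> cosx x (G2 t') (G1 s')"
      using cos_mono[OF c g2 xz, of "G1 s'" t' t] G1ne[of s'] r by auto
    also have "\<dots> = cosx x (G1 s') (G2 t')" by (rule cosx_sym)
    finally show ?thesis using QG[OF that(1)] QG[OF that(2)] p p' by simp
  qed
  define L where "L = Sup (Q ` S)"
  have S11: "(1,1) \<in> S" unfolding S_def by auto
  have ne: "Q ` S \<noteq> {}" using S11 by auto
  have bdd: "bdd_above (Q ` S)" unfolding bdd_above_def using Qb by blast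
  have QL: "Q p \<le> L" if "p \<in> S" for p unfolding L_def using bdd that by (auto intro: cSup_upper)
  have L1: "L \<le> 1" unfolding L_def using ne Qb by (auto intro!: cSup_least)
  have Q11: "Q (1,1) = cosx x y z"
    using QG[OF S11] mg_1[OF g1] mg_1[OF g2] by simp
  have L11: "cosx x y z \<le> L" using QL[OF S11] Q11 by simp
  have Lm1: "-1 \<le> L" using L11 Qb[OF S11] Q11 by simp
  let ?F = "at (0::real,0::real) within S"
  have tQ: "(Q \<longlongrightarrow> L) ?F"
    unfolding order_tendsto_iff
  proof (intro conjI allI impI)
    fix u assume "L < u"
    then show "eventually (\<lambda>p. Q p < u) ?F"
      unfolding eventually_at using QL by (intro exI[of _ 1]) force
  next
    fix l assume "l < L"
    then obtain p0 where p0: "p0 \<in> S" "l < Q p0"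
      using less_cSup_iff[OF ne bdd] unfolding L_def by auto
    define d where "d = min (fst p0) (snd p0)"
    have d: "d > 0" using p0 unfolding d_def S_def by auto
    show "eventually (\<lambda>p. l < Q p) ?F"
      unfolding eventually_at
    proof (intro exI[of _ d] conjI d ballI impI)
      fix p assume pS: "p \<in> S" and "p \<noteq> (0,0) \<and> dist p (0,0) < d"
      then have dp: "dist p (0,0) < d" by auto
      have "dist (fst p) 0 \<le> dist p (0,0)" using dist_fst_le[of p "(0,0)"] by simp
      moreover have "dist (snd p) 0 \<le> dist p (0,0)" using dist_snd_le[of p "(0,0)"] by simp
      ultimately have "fst p \<le> fst p0" "snd p \<le> snd p0" using dp pS unfolding d_def S_def
        by (auto simp: dist_real_def mem_Times_iff)
      then have "Q p0 \<le> Q p" using mono[OF p0(1) pS] by simp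
      then show "l < Q p" using p0 by simp
    qed
  qed
  have ev: "eventually (\<lambda>p. Q p \<in> {-1..1}) ?F"
    unfolding eventually_at using Qb by (intro exI[of _ 1]) force
  have tA: "((\<lambda>p. arccos (Q p)) \<longlongrightarrow> arccos L) ?F"
    by (rule continuous_on_tendsto_compose[OF continuous_on_arccos' tQ _ ev]) (use L1 Lm1 in auto)
  have fun_eq: "(\<lambda>(s,t). comp_angle (geod x y s) x (geod x z t)) = (\<lambda>p. arccos (Q p))"
    by (auto simp: Q_def comp_angle_cosx)
  have ntriv: "\<not> trivial_limit ?F"
  proof -
    have "closure S = {0..1} \<times> {0..1}" unfolding S_def closure_Times by simp
    then have "(0,0) \<in> closure S" by auto
    moreover have "S - {(0,0)} = S" unfolding S_def by auto
    ultimately show ?thesis using not_trivial_limit_within by metis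
  qed
  have "geo_angle y x z = arccos L"
    unfolding geo_angle_def S_def[symmetric] fun_eq using tendsto_Lim[OF ntriv tA] .
  also have "\<dots> \<le> arccos (cosx x y z)"
    by (rule arccos_le_arccos) (use L11 L1 Qb[OF S11] Q11 in auto)
  finally show ?thesis .
qed

theorem mainTheorem13:
  fixes \<xi> :: "real \<Rightarrow> 'a::complete_space" and l :: ereal and \<tau> t1 t2 :: real
  assumes "CAT0 TYPE('a)"
    and "l > 0"
    and "self_contracted l \<xi>"
    and "0 \<le> \<tau>" and "ereal \<tau> < l"
    and "\<tau> < t1" and "ereal t1 < l" and "\<tau> < t2" and "ereal t2 < l"
    and "\<xi> t1 \<noteq> \<xi> \<tau>" and "\<xi> t2 \<noteq> \<xi> \<tau>"
  shows "geo_angle (\<xi> t1) (\<xi> \<tau>) (\<xi> t2) < pi / 2"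
proof -
  define x y z where "x = \<xi> \<tau>" "y = \<xi> t1" "z = \<xi> t2"
  have xy: "x \<noteq> y" and xz: "x \<noteq> z" using assms x_y_z_def by auto
  have a: "dist x y > 0" "dist x z > 0" using xy xz by auto
  have sc: "dist y z \<le> dist x z \<or> dist y z \<le> dist x y"
  proof (cases "t1 \<le> t2")
    case True
    then have "dist (\<xi> t1) (\<xi> t2) \<le> dist (\<xi> \<tau>) (\<xi> t2)"
      using assms(3,4,6,9) unfolding self_contracted_def by auto
    then show ?thesis unfolding x_y_z_def by simp
  next
    case False
    then have "dist (\<xi> t2) (\<xi> t1) \<le> dist (\<xi> \<tau>) (\<xi> t1)"
      using assms(3,4,7,8) unfolding self_contracted_def by auto
    then show ?thesis unfolding x_y_z_def by (simp add: dist_commute)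
  qed
  have num: "(dist x y)\<^sup>2 + (dist x z)\<^sup>2 - (dist y z)\<^sup>2 > 0"
  proof -
    have "(dist y z)\<^sup>2 \<le> (dist x z)\<^sup>2 \<or> (dist y z)\<^sup>2 \<le> (dist x y)\<^sup>2"
      using sc by (auto intro: power_mono)
    moreover have "(dist x y)\<^sup>2 > 0" "(dist x z)\<^sup>2 > 0" using a by auto
    ultimately show ?thesis by linarith
  qed
  have pos: "cosx x y z > 0" unfolding cosx_def using num a by simp
  have b: "-1 \<le> cosx x y z \<and> cosx x y z \<le> 1" using cosx_bounds xy xz by metis
  have "arccos (cosx x y z) < arccos 0"
    by (rule arccos_less_arccos) (use pos b in auto)
  then have "arccos (cosx x y z) < pi / 2" by simp
  moreover have "geo_angle y x z \<le> arccos (cosx x y z)"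
    by (rule angle_le_comp[OF assms(1) xy xz])
  ultimately show ?thesis unfolding x_y_z_def by simp
qed

end
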